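(* Let $G$ be a connected graph on $n\geq 6$ vertices with edge-connectivity $k\geq 2$. Then $$ABC(G)\leq k\sqrt{\frac{n+k-3}{k(n-1)}}+\frac{k(k-1)}{2(n-1)}\sqrt{2n-4}+\frac{(n-k-1)(n-k-2)}{2(n-2)}\sqrt{2n-6}+k(n-k-1)\sqrt{\frac{2n-5}{(n-1)(n-2)}},$$ with equality if and only if $G\cong K_k\vee (K_1+K_{n-k-1})$.
   Context: For a simple graph $G$, $ABC(G)=\sum_{uv\in E(G)}\sqrt{\frac{d(u)+d(v)-2}{d(u)d(v)}}$, where $d(u)$ is the degree of $u$. The edge-connectivity of $G$ is the minimum number of edges whose removal disconnects $G$. $K_r$ is the complete graph on $r$ vertices, $H_1+H_2$ denotes the disjoint union, and $G\vee H$ (join) is the graph on $V(G)\cup V(H)$ with edge set $E(G)\cup E(H)\cup\{xy: x\in V(G), y\in V(H)\}$. Thus $K_k\vee(K_1+K_{n-k-1})$ is the graph obtained from $K_{n-1}$ by adding a new vertex adjacent to exactly $k$ of its vertices. *)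

theory Defs
  imports Complex_Main
begin

definition simple_graph :: "'a set \<Rightarrow> 'a set set \<Rightarrow> bool" where
  "simple_graph V E \<longleftrightarrow> finite V \<and> (\<forall>e\<in>E. \<exists>u v. e = {u, v} \<and> u \<in> V \<and> v \<in> V \<and> u \<noteq> v)"

definition degree :: "'a set \<Rightarrow> 'a set set \<Rightarrow> 'a \<Rightarrow> nat" where
  "degree V E u = card {v \<in> V. {u, v} \<in> E}"

definition connected_graph :: "'a set \<Rightarrow> 'a set set \<Rightarrow> bool" where
  "connected_graph V E \<longleftrightarrow> V \<noteq> {} \<and>
     (\<forall>u\<in>V. \<forall>v\<in>V. (\<lambda>x y. {x, y} \<in> E)\<^sup>*\<^sup>* u v)"

definition edge_connectivity :: "'a set \<Rightarrow> 'a set set \<Rightarrow> nat" where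
  "edge_connectivity V E = (LEAST m. \<exists>F \<subseteq> E. card F = m \<and> \<not> connected_graph V (E - F))"

definition ABC :: "'a set \<Rightarrow> 'a set set \<Rightarrow> real" where
  "ABC V E = (\<Sum>e\<in>E. sqrt ((real (\<Sum>u\<in>e. degree V E u) - 2) / real (\<Prod>u\<in>e. degree V E u)))"

text \<open>The graph K_k \<or> (K_1 + K_{n-k-1}) on vertex set {0..<n}: vertices 0..k-1 form K_k,
  vertex k is the K_1, vertices k+1..n-1 form K_{n-k-1}.\<close>
definition join_graph_edges :: "nat \<Rightarrow> nat \<Rightarrow> nat set set" where
  "join_graph_edges n k = {{i, j} | i j. i < n \<and> j < n \<and> i \<noteq> j \<and>
       \<not> (i = k \<and> k < j) \<and> \<not> (j = k \<and> k < i)}"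

definition graph_iso :: "'a set \<Rightarrow> 'a set set \<Rightarrow> 'b set \<Rightarrow> 'b set set \<Rightarrow> bool" where
  "graph_iso V E W F \<longleftrightarrow> (\<exists>f. bij_betw f V W \<and>
      (\<forall>u\<in>V. \<forall>v\<in>V. {u, v} \<in> E \<longleftrightarrow> {f u, f v} \<in> F))"

end

theory Submission
  imports Defs
begin


definition fab :: "real \<Rightarrow> real \<Rightarrow> real" where
  "fab x y = sqrt ((x + y - 2) / (x * y))"

lemma fab_sq: "x \<ge> 1 \<Longrightarrow> y \<ge> 1 \<Longrightarrow> (fab x y)^2 = (x + y - 2) / (x * y)"
  unfolding fab_def by (simp add: divide_nonneg_pos)

lemma sqrt_ge_inv: assumes "a > 0" "b \<ge> 1/a" shows "sqrt b \<ge> 1 / sqrt a"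
proof -
  have "1 / sqrt a = sqrt (1/a)" by (simp add: real_sqrt_divide)
  also have "\<dots> \<le> sqrt b" using assms by simp
  finally show ?thesis .
qed

lemma sqrt_gt_inv: assumes "a > 0" "b > 1/a" shows "sqrt b > 1 / sqrt a"
proof -
  have "1 / sqrt a = sqrt (1/a)" by (simp add: real_sqrt_divide)
  also have "\<dots> < sqrt b" using assms by simp
  finally show ?thesis .
qed

lemma fab_loss:
  assumes x: "x \<ge> 2" and y: "y \<ge> 2"
  shows "fab x y - fab (x+1) y \<le> 1 / (2 * x * sqrt (x+1))"
proof -
  define A where "A = fab x y"
  define B where "B = fab (x+1) y"
  define s where "s = sqrt (x+1)"
  have s0: "s > 0" using x by (simp add: s_def)
  have ss: "s * s = x + 1" using x by (simp add: s_def)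
  have A2: "A^2 = (x + y - 2) / (x * y)" using x y by (simp add: A_def fab_sq)
  have B2: "B^2 = (x + 1 + y - 2) / ((x+1) * y)" using x y by (simp add: B_def fab_sq)
  have Bge: "B \<ge> 1 / s"
  proof -
    have e: "(x + 1 + y - 2) / ((x + 1) * y) = (1/(x+1)) * ((x+y-1)/y)" using x y by (simp add: field_simps)
    have "(x+y-1)/y \<ge> 1" using x y by simp
    hence "(1/(x+1)) * 1 \<le> (1/(x+1)) * ((x+y-1)/y)" using x by (intro mult_left_mono) auto
    hence h: "1/(x+1) \<le> (x + 1 + y - 2) / ((x + 1) * y)" unfolding e by (simp only: mult_1_right)
    have "x + 1 > 0" using x by simp
    from sqrt_ge_inv[OF this h] show ?thesis unfolding B_def fab_def s_def .
  qed
  have B0: "B \<ge> 0" unfolding B_def fab_def by (rule real_sqrt_ge_zero) (use x y in simp)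
  have xp: "x \<noteq> 0" "y \<noteq> 0" "x + 1 \<noteq> 0" using x y by auto
  have "A^2 - B^2 = ((x+y-2)*((x+1)*y) - (x*y)*(x+1+y-2)) / ((x*y)*((x+1)*y))"
    unfolding A2 B2 using xp by (simp add: diff_frac_eq)
  also have "\<dots> = (y*(y-2))/(y*(x*(x+1)*y))"
    by (rule arg_cong2[where f="(/)"]) (simp_all add: algebra_simps)
  also have "\<dots> = (y - 2) / (x * (x+1) * y)" using xp by simp
  finally have "A^2 - B^2 = (y - 2) / (x * (x+1) * y)" .
  also have "\<dots> = ((y-2)/y) / (x*(x+1))" by (simp add: mult.commute)
  also have "\<dots> \<le> 1 / (x * (x+1))"
    using x y by (intro divide_right_mono) auto
  finally have d: "A^2 - B^2 \<le> 1 / (x * (x+1))" .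
  have AB: "A \<ge> B"
  proof -
    have "A^2 \<ge> B^2" using `A^2 - B^2 = (y - 2) / (x * (x+1) * y)` x y
    proof -
      have "(y - 2) / (x * (x + 1) * y) \<ge> 0" using x y by (intro divide_nonneg_pos) auto
      thus ?thesis using `A^2 - B^2 = (y - 2) / (x * (x+1) * y)` by linarith
    qed
    moreover have "A \<ge> 0" unfolding A_def fab_def by (rule real_sqrt_ge_zero) (use x y in simp)
    ultimately show ?thesis using B0 by (simp add: power2_le_iff_abs_le)
  qed
  have sum: "A + B \<ge> 2 / s" using AB Bge by simp
  have "(A - B) * (A + B) \<le> 1 / (x * (x+1))" using d by (simp add: power2_eq_square algebra_simps)
  moreover have AB0: "A + B > 0"
  proof -
    have "2 / s > 0" using s0 by simp
    thus ?thesis using sum by linarith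
  qed
  ultimately have "A - B \<le> 1 / (x * (x+1)) / (A + B)" by (simp only: pos_le_divide_eq)
  also have "\<dots> \<le> 1 / (x * (x+1)) / (2 / s)"
  proof (rule divide_left_mono)
    show "0 < (A + B) * (2 / s)" using AB0 s0 by simp
    show "2 / s \<le> A + B" by (rule sum)
    show "0 \<le> 1 / (x * (x + 1))" using x by simp
  qed
  also have "\<dots> = s / (2 * (x * (s * s)))" unfolding ss by simp
  also have "\<dots> = 1 / (2 * x * s)" using s0 x by simp
  finally show ?thesis by (simp add: A_def B_def s_def)
qed

lemma fab_gain:
  assumes x: "x \<ge> 2" and y: "y \<ge> 2"
  shows "1 / (2 * sqrt (x+1)) + 1 / (2 * sqrt (y+1)) < fab (x+1) (y+1)"
proof -
  have e: "(x + 1 + (y + 1) - 2) / ((x + 1) * (y + 1)) = (1/(x+1)) * ((x+y)/(y+1))" using x y by (simp add: field_simps)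
  have e2: "(x + 1 + (y + 1) - 2) / ((x + 1) * (y + 1)) = (1/(y+1)) * ((x+y)/(x+1))" using x y by (simp add: field_simps)
  have "(x+y)/(y+1) > 1" "(x+y)/(x+1) > 1" using x y by simp_all
  hence "(1/(x+1)) * 1 < (1/(x+1)) * ((x+y)/(y+1))" "(1/(y+1)) * 1 < (1/(y+1)) * ((x+y)/(x+1))"
    using x y by (intro mult_strict_left_mono; simp)+
  hence h1: "1/(x+1) < (x + 1 + (y + 1) - 2) / ((x + 1) * (y + 1))"
    and h2: "1/(y+1) < (x + 1 + (y + 1) - 2) / ((x + 1) * (y + 1))"
    by (simp only: e mult_1_right, simp only: e2 mult_1_right)
  have p: "x + 1 > 0" "y + 1 > 0" using x y by simp_all
  have a: "fab (x+1) (y+1) > 1 / sqrt (x+1)" unfolding fab_def by (rule sqrt_gt_inv[OF p(1) h1])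
  have b: "fab (x+1) (y+1) > 1 / sqrt (y+1)" unfolding fab_def by (rule sqrt_gt_inv[OF p(2) h2])
  show ?thesis using a b by simp
qed




lemma sg_finE: "simple_graph V E \<Longrightarrow> finite E"
proof -
  assume a: "simple_graph V E"
  hence "E \<subseteq> Pow V" unfolding simple_graph_def by fastforce
  moreover have "finite V" using a unfolding simple_graph_def by simp
  ultimately show ?thesis by (meson finite_Pow_iff finite_subset)
qed

lemma sg_finV: "simple_graph V E \<Longrightarrow> finite V"
  unfolding simple_graph_def by simp

lemma sg_edge: "simple_graph V E \<Longrightarrow> e \<in> E \<Longrightarrow> \<exists>x y. e = {x,y} \<and> x \<in> V \<and> y \<in> V \<and> x \<noteq> y"
  unfolding simple_graph_def by blast

lemma sg_edge_sub: "simple_graph V E \<Longrightarrow> e \<in> E \<Longrightarrow> e \<subseteq> V"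
  using sg_edge by fastforce

lemma sg_loop: "simple_graph V E \<Longrightarrow> {x} \<notin> E"
  unfolding simple_graph_def by (metis doubleton_eq_iff insert_absorb2)

lemma sg_mem: "simple_graph V E \<Longrightarrow> {x,y} \<in> E \<Longrightarrow> x \<in> V \<and> y \<in> V \<and> x \<noteq> y"
  unfolding simple_graph_def by (metis doubleton_eq_iff insert_absorb2)

lemma degree_edges:
  assumes sg: "simple_graph V E" and u: "u \<in> V"
  shows "degree V E u = card {e\<in>E. u \<in> e}"
proof -
  have "bij_betw (\<lambda>v. {u,v}) {v\<in>V. {u,v}\<in>E} {e\<in>E. u \<in> e}"
  proof (rule bij_betwI')
    show "\<And>x y. x \<in> {v \<in> V. {u, v} \<in> E} \<Longrightarrow> y \<in> {v \<in> V. {u, v} \<in> E} \<Longrightarrow> ({u, x} = {u, y}) = (x = y)"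
      by (metis doubleton_eq_iff)
    show "\<And>x. x \<in> {v \<in> V. {u, v} \<in> E} \<Longrightarrow> {u, x} \<in> {e \<in> E. u \<in> e}" by auto
    fix e assume "e \<in> {e \<in> E. u \<in> e}"
    then obtain x y where e: "e = {x,y}" "x \<in> V" "y \<in> V" "x \<noteq> y" "e \<in> E" "u \<in> e"
      using sg_edge[OF sg] by blast
    show "\<exists>x\<in>{v \<in> V. {u, v} \<in> E}. e = {u, x}"
    proof (cases "u = x")
      case True thus ?thesis using e by auto
    next
      case False hence "u = y" using e by auto
      thus ?thesis using e by (auto simp: insert_commute)
    qed
  qed
  thus ?thesis unfolding degree_def by (rule bij_betw_same_card)
qed

definition eterm :: "'a set \<Rightarrow> 'a set set \<Rightarrow> 'a set \<Rightarrow> real" where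
  "eterm V E e = sqrt ((real (\<Sum>u\<in>e. degree V E u) - 2) / real (\<Prod>u\<in>e. degree V E u))"

lemma ABC_eterm: "ABC V E = (\<Sum>e\<in>E. eterm V E e)"
  unfolding ABC_def eterm_def by simp

lemma eterm_pair: "x \<noteq> y \<Longrightarrow> eterm V E {x,y} = fab (real (degree V E x)) (real (degree V E y))"
  unfolding eterm_def fab_def by simp

lemma degree_insert:
  assumes sg: "simple_graph V E" and uv: "u \<in> V" "v \<in> V" "u \<noteq> v" "{u,v} \<notin> E"
  shows "degree V (insert {u,v} E) x = degree V E x + (if x = u \<or> x = v then 1 else 0)"
proof -
  have fin: "finite {w \<in> V. {x, w} \<in> E}" using sg_finV[OF sg] by simp
  show ?thesis
  proof (cases "x = u")
    case True
    have "{w \<in> V. {x, w} \<in> insert {u,v} E} = insert v {w \<in> V. {x, w} \<in> E}"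
      using True uv by (auto simp: doubleton_eq_iff)
    moreover have "v \<notin> {w \<in> V. {x, w} \<in> E}" using True uv by auto
    ultimately show ?thesis unfolding degree_def using fin True by simp
  next
    case F1: False
    show ?thesis
    proof (cases "x = v")
      case True
      have "{w \<in> V. {x, w} \<in> insert {u,v} E} = insert u {w \<in> V. {x, w} \<in> E}"
        using True uv by (auto simp: doubleton_eq_iff)
      moreover have "u \<notin> {w \<in> V. {x, w} \<in> E}" using True uv by (auto simp: insert_commute)
      ultimately show ?thesis unfolding degree_def using fin True by simp
    next
      case False
      have "{w \<in> V. {x, w} \<in> insert {u,v} E} = {w \<in> V. {x, w} \<in> E}"
        using False F1 uv by (auto simp: doubleton_eq_iff)
      thus ?thesis unfolding degree_def using False F1 by simp
    qed
  qed
qed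

lemma sg_insert: "simple_graph V E \<Longrightarrow> u \<in> V \<Longrightarrow> v \<in> V \<Longrightarrow> u \<noteq> v \<Longrightarrow> simple_graph V (insert {u,v} E)"
  unfolding simple_graph_def by blast

definition Lf :: "real \<Rightarrow> real" where "Lf t = 1 / (2 * t * sqrt (t + 1))"

lemma ABC_insert_less:
  assumes sg: "simple_graph V E" and uv: "u \<in> V" "v \<in> V" "u \<noteq> v" "{u,v} \<notin> E"
    and deg: "\<And>x. x \<in> V \<Longrightarrow> degree V E x \<ge> 2"
  shows "ABC V E < ABC V (insert {u,v} E)"
proof -
  let ?E' = "insert {u,v} E"
  let ?d = "\<lambda>x. real (degree V E x)"
  have fin: "finite E" using sg_finE[OF sg] .
  have dI: "\<And>x. degree V ?E' x = degree V E x + (if x = u \<or> x = v then 1 else 0)"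
    using degree_insert[OF sg uv] .
  have per: "eterm V ?E' e \<ge> eterm V E e - (if u \<in> e then Lf (?d u) else 0) - (if v \<in> e then Lf (?d v) else 0)"
    if e: "e \<in> E" for e
  proof -
    obtain x y where xy: "e = {x,y}" "x \<in> V" "y \<in> V" "x \<noteq> y" using sg_edge[OF sg e] by blast
    have nb: "\<not> (u \<in> e \<and> v \<in> e)"
    proof
      assume "u \<in> e \<and> v \<in> e"
      hence "e = {u,v}" using xy uv by auto
      thus False using e uv by simp
    qed
    have loss: "eterm V ?E' {a,w} \<ge> eterm V E {a,w} - Lf (?d a)"
      if aw: "a \<in> V" "w \<in> V" "a \<noteq> w" "a = u \<or> a = v" "w \<noteq> u" "w \<noteq> v" for a w
    proof -
      have "eterm V ?E' {a,w} = fab (?d a + 1) (?d w)"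
        using aw by (simp add: eterm_pair dI add.commute)
      moreover have "eterm V E {a,w} = fab (?d a) (?d w)" using aw by (simp add: eterm_pair)
      moreover have "fab (?d a) (?d w) - fab (?d a + 1) (?d w) \<le> Lf (?d a)"
        unfolding Lf_def using deg aw by (intro fab_loss) auto
      ultimately show ?thesis by simp
    qed
    show ?thesis
    proof (cases "u \<in> e")
      case True
      then obtain w where w: "e = {u,w}" "w \<in> V" "w \<noteq> u" using xy by (auto simp: insert_commute)
      have "w \<noteq> v" using nb w by auto
      hence "v \<notin> e" using w uv by auto
      thus ?thesis using loss[of u w] w uv True \<open>w \<noteq> v\<close> by simp
    next
      case F: False
      show ?thesis
      proof (cases "v \<in> e")
        case True
        then obtain w where w: "e = {v,w}" "w \<in> V" "w \<noteq> v" using xy by (auto simp: insert_commute)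
        have "w \<noteq> u" using F w by auto
        thus ?thesis using loss[of v w] w uv True F by simp
      next
        case False
        have "x \<noteq> u" "x \<noteq> v" "y \<noteq> u" "y \<noteq> v" using F False xy by auto
        hence "eterm V ?E' e = eterm V E e" using xy by (simp add: eterm_pair dI)
        thus ?thesis using F False by simp
      qed
    qed
  qed
  have cnt: "(\<Sum>e\<in>E. (if w \<in> e then Lf (?d w) else 0)) = ?d w * Lf (?d w)" if "w \<in> V" for w
  proof -
    have "(\<Sum>e\<in>E. (if w \<in> e then Lf (?d w) else 0)) = (\<Sum>e\<in>{e\<in>E. w \<in> e}. Lf (?d w))"
      by (rule sum.inter_filter[OF fin, symmetric])
    also have "\<dots> = ?d w * Lf (?d w)" using degree_edges[OF sg that] by simp
    finally show ?thesis .
  qed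
  have cL: "?d w * Lf (?d w) = 1 / (2 * sqrt (?d w + 1))" if "w \<in> V" for w
    using deg[OF that] unfolding Lf_def by (simp add: field_simps)
  have "ABC V E - (1 / (2 * sqrt (?d u + 1)) + 1 / (2 * sqrt (?d v + 1)))
      = (\<Sum>e\<in>E. eterm V E e - (if u \<in> e then Lf (?d u) else 0) - (if v \<in> e then Lf (?d v) else 0))"
    using cnt[OF uv(1)] cnt[OF uv(2)] cL[OF uv(1)] cL[OF uv(2)]
    by (simp add: ABC_eterm sum_subtractf)
  also have "\<dots> \<le> (\<Sum>e\<in>E. eterm V ?E' e)" by (rule sum_mono) (use per in auto)
  finally have a: "ABC V E - (1 / (2 * sqrt (?d u + 1)) + 1 / (2 * sqrt (?d v + 1))) \<le> (\<Sum>e\<in>E. eterm V ?E' e)" .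
  have b: "eterm V ?E' {u,v} > 1 / (2 * sqrt (?d u + 1)) + 1 / (2 * sqrt (?d v + 1))"
  proof -
    have "eterm V ?E' {u,v} = fab (?d u + 1) (?d v + 1)" using uv by (simp add: eterm_pair dI add.commute)
    moreover have "?d u \<ge> 2" "?d v \<ge> 2" using deg[OF uv(1)] deg[OF uv(2)] by simp_all
    ultimately show ?thesis using fab_gain by simp
  qed
  have "ABC V ?E' = eterm V ?E' {u,v} + (\<Sum>e\<in>E. eterm V ?E' e)"
    using fin uv by (simp add: ABC_eterm)
  thus ?thesis using a b by linarith
qed




lemma ABC_mono:
  assumes sg: "simple_graph V E" and sgH: "simple_graph V H" and sub: "E \<subseteq> H"
    and deg: "\<And>x. x \<in> V \<Longrightarrow> degree V E x \<ge> 2"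
  shows "ABC V E \<le> ABC V H \<and> (E \<noteq> H \<longrightarrow> ABC V E < ABC V H)"
  using sg sub deg
proof (induction "card (H - E)" arbitrary: E rule: less_induct)
  case (less E)
  show ?case
  proof (cases "E = H")
    case True thus ?thesis by simp
  next
    case False
    then obtain e where e: "e \<in> H" "e \<notin> E" using less.prems(2) by blast
    then obtain u v where uv: "e = {u,v}" "u \<in> V" "v \<in> V" "u \<noteq> v" using sg_edge[OF sgH] by blast
    let ?E1 = "insert {u,v} E"
    have sg1: "simple_graph V ?E1" using sg_insert[OF less.prems(1) uv(2-4)] .
    have sub1: "?E1 \<subseteq> H" using less.prems(2) e uv by auto
    have deg1: "degree V ?E1 x \<ge> 2" if "x \<in> V" for x
      using degree_insert[OF less.prems(1) uv(2-4)] e uv less.prems(3)[OF that] by simp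
    have finH: "finite H" using sg_finE[OF sgH] .
    have "card (H - ?E1) < card (H - E)"
      using finH e uv by (intro psubset_card_mono) auto
    from less.hyps[OF this sg1 sub1 deg1] have "ABC V ?E1 \<le> ABC V H" by blast
    moreover have "ABC V E < ABC V ?E1"
      using ABC_insert_less[OF less.prems(1) uv(2-4)] e uv less.prems(3) by auto
    ultimately show ?thesis by linarith
  qed
qed

lemma not_conn_isolated:
  assumes "x \<in> V" "y \<in> V" "x \<noteq> y" "\<And>z. {x,z} \<notin> E'"
  shows "\<not> connected_graph V E'"
proof
  assume "connected_graph V E'"
  hence "(\<lambda>a b. {a, b} \<in> E')\<^sup>*\<^sup>* x y" using assms unfolding connected_graph_def by blast
  thus False
    by (rule converse_rtranclpE) (use assms in auto)
qed

lemma two_vertices: "finite V \<Longrightarrow> card V \<ge> 2 \<Longrightarrow> x \<in> V \<Longrightarrow> \<exists>y\<in>V. y \<noteq> x"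
proof -
  assume a: "finite V" "card V \<ge> 2" "x \<in> V"
  hence "card (V - {x}) \<ge> 1" by simp
  hence "V - {x} \<noteq> {}" by (metis card.empty not_one_le_zero)
  thus ?thesis by blast
qed

lemma ec_le_degree:
  assumes sg: "simple_graph V E" and c2: "card V \<ge> 2" and x: "x \<in> V"
  shows "edge_connectivity V E \<le> degree V E x"
proof -
  obtain y where y: "y \<in> V" "y \<noteq> x" using two_vertices[OF sg_finV[OF sg] c2 x] by blast
  let ?F = "{e\<in>E. x \<in> e}"
  have "?F \<subseteq> E" "card ?F = degree V E x" using degree_edges[OF sg x] by auto
  moreover have "\<not> connected_graph V (E - ?F)"
    by (rule not_conn_isolated[OF x y(1)]) (use y in auto)
  ultimately show ?thesis unfolding edge_connectivity_def by (intro Least_le) blast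
qed

lemma ec_witness:
  assumes sg: "simple_graph V E" and c2: "card V \<ge> 2"
  shows "\<exists>F\<subseteq>E. card F = edge_connectivity V E \<and> \<not> connected_graph V (E - F)"
proof -
  have V: "V \<noteq> {}" using c2 by auto
  then obtain x where x: "x \<in> V" by blast
  obtain y where y: "y \<in> V" "y \<noteq> x" using two_vertices[OF sg_finV[OF sg] c2 x] by blast
  have "\<not> connected_graph V (E - E)"
    by (rule not_conn_isolated[OF x y(1)]) (use y in auto)
  hence "\<exists>F\<subseteq>E. card F = card E \<and> \<not> connected_graph V (E - F)" by blast
  hence "\<exists>m. \<exists>F\<subseteq>E. card F = m \<and> \<not> connected_graph V (E - F)" by blast
  thus ?thesis unfolding edge_connectivity_def by (rule LeastI_ex)
qed

lemma degree_le: "simple_graph V E \<Longrightarrow> x \<in> V \<Longrightarrow> degree V E x \<le> card V - 1"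
proof -
  assume sg: "simple_graph V E" and x: "x \<in> V"
  have "{y\<in>V. {x,y} \<in> E} \<subseteq> V - {x}" using sg_loop[OF sg] by auto
  hence "degree V E x \<le> card (V - {x})" unfolding degree_def
    using sg_finV[OF sg] by (intro card_mono) auto
  thus ?thesis using x sg_finV[OF sg] by simp
qed




lemma arith_side: fixes a k :: nat
  assumes "a \<ge> 1" "a * (k+1) \<le> a * (a - 1) + k" shows "a \<ge> k + 2"
proof (rule ccontr)
  assume "\<not> a \<ge> k + 2"
  hence le: "a \<le> k + 1" by simp
  define b where "b = a - 1"
  have a: "a = b + 1" using assms(1) b_def by simp
  define c where "c = k + 1 - a"
  have kc: "k = b + c" using le a c_def by simp
  have "a * (k+1) = (b+1)*(b+c+1)" using a kc by simp
  also have "\<dots> = (b+1)*b + (b+c) + (b * c + 1)" by (simp add: algebra_simps)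
  finally have "a * (k+1) = a * (a-1) + k + (b*c+1)" using a kc by simp
  thus False using assms(2) by simp
qed

lemma side_big:
  assumes sg: "simple_graph V E" and AV: "A \<subseteq> V" and A0: "A \<noteq> {}"
    and cross: "\<And>x y. x \<in> A \<Longrightarrow> y \<in> V \<Longrightarrow> y \<notin> A \<Longrightarrow> {x,y} \<in> E \<Longrightarrow> {x,y} \<in> F"
    and finF: "finite F" and cF: "card F \<le> k"
    and deg: "\<And>x. x \<in> V \<Longrightarrow> degree V E x \<ge> k + 1"
  shows "card A \<ge> k + 2"
proof -
  have finV: "finite V" using sg_finV[OF sg] .
  have finA: "finite A" using finV AV finite_subset by blast
  define c where "c x = card {y\<in>V-A. {x,y}\<in>E}" for x
  have d: "degree V E x \<le> (card A - 1) + c x" if x: "x \<in> A" for x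
  proof -
    have "{y\<in>V. {x,y}\<in>E} = {y\<in>A. {x,y}\<in>E} \<union> {y\<in>V-A. {x,y}\<in>E}" using AV by auto
    hence "degree V E x = card ({y\<in>A. {x,y}\<in>E} \<union> {y\<in>V-A. {x,y}\<in>E})" unfolding degree_def by simp
    hence "degree V E x \<le> card {y\<in>A. {x,y}\<in>E} + c x" unfolding c_def
      using card_Un_le[of "{y\<in>A. {x,y}\<in>E}" "{y\<in>V-A. {x,y}\<in>E}"] by simp
    moreover have "card {y\<in>A. {x,y}\<in>E} \<le> card (A - {x})"
      using sg_loop[OF sg, of x] finA by (intro card_mono) auto
    ultimately show ?thesis using x finA by simp
  qed
  have s: "(\<Sum>x\<in>A. c x) \<le> k"
  proof -
    have "(\<Sum>x\<in>A. c x) = card (SIGMA x:A. {y\<in>V-A. {x,y}\<in>E})"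
      unfolding c_def using finA finV by (subst card_SigmaI) auto
    also have "\<dots> \<le> card F"
    proof (rule card_inj_on_le[where f="\<lambda>(x,y). {x,y}"])
      show "inj_on (\<lambda>(x, y). {x, y}) (SIGMA x:A. {y \<in> V - A. {x, y} \<in> E})"
        by (auto simp: inj_on_def doubleton_eq_iff)
      show "(\<lambda>(x, y). {x, y}) ` (SIGMA x:A. {y \<in> V - A. {x, y} \<in> E}) \<subseteq> F"
        using cross by auto
    qed (rule finF)
    finally show ?thesis using cF by simp
  qed
  have "card A * (k+1) = (\<Sum>x\<in>A. k+1)" by simp
  also have "\<dots> \<le> (\<Sum>x\<in>A. degree V E x)" using AV deg by (intro sum_mono) auto
  also have "\<dots> \<le> (\<Sum>x\<in>A. (card A - 1) + c x)" using d by (intro sum_mono) auto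
  also have "\<dots> = card A * (card A - 1) + (\<Sum>x\<in>A. c x)" by (simp add: sum.distrib)
  also have "\<dots> \<le> card A * (card A - 1) + k" using s by simp
  finally have "card A * (k+1) \<le> card A * (card A - 1) + k" .
  moreover have "card A \<ge> 1" using A0 finA by (simp add: Suc_le_eq card_gt_0_iff)
  ultimately show ?thesis using arith_side by blast
qed

lemma edge_count:
  assumes sg: "simple_graph V E" and AV: "A \<subseteq> V"
    and cross: "\<And>x y. x \<in> A \<Longrightarrow> y \<in> V \<Longrightarrow> y \<notin> A \<Longrightarrow> {x,y} \<in> E \<Longrightarrow> {x,y} \<in> F"
    and finF: "finite F"
  shows "card E \<le> (card A choose 2) + (card (V - A) choose 2) + card F"
proof -
  have finV: "finite V" using sg_finV[OF sg] .
  have finA: "finite A" using finV AV finite_subset by blast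
  let ?S1 = "{e. e \<subseteq> A \<and> card e = 2}" and ?S2 = "{e. e \<subseteq> V - A \<and> card e = 2}"
  have "E \<subseteq> ?S1 \<union> ?S2 \<union> F"
  proof
    fix e assume e: "e \<in> E"
    then obtain x y where xy: "e = {x,y}" "x \<in> V" "y \<in> V" "x \<noteq> y" using sg_edge[OF sg] by blast
    show "e \<in> ?S1 \<union> ?S2 \<union> F"
    proof (cases "x \<in> A")
      case True
      show ?thesis
      proof (cases "y \<in> A")
        case True thus ?thesis using \<open>x \<in> A\<close> xy by auto
      next
        case False thus ?thesis using cross[of x y] True xy e by auto
      qed
    next
      case False
      show ?thesis
      proof (cases "y \<in> A")
        case True thus ?thesis using cross[of y x] False xy e by (auto simp: insert_commute)
      next
        case F2: False thus ?thesis using False xy by auto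
      qed
    qed
  qed
  moreover have "finite (?S1 \<union> ?S2 \<union> F)" using finA finV finF by auto
  ultimately have "card E \<le> card (?S1 \<union> ?S2 \<union> F)" by (rule card_mono[rotated])
  also have "\<dots> \<le> card ?S1 + card ?S2 + card F"
    using card_Un_le[of "?S1 \<union> ?S2" F] card_Un_le[of ?S1 ?S2] by linarith
  also have "\<dots> = (card A choose 2) + (card (V - A) choose 2) + card F"
    using finA finV by (simp add: n_subsets)
  finally show ?thesis .
qed




lemma cs_card:
  fixes f :: "'b \<Rightarrow> real" assumes fin: "finite I"
  shows "(\<Sum>i\<in>I. f i)^2 \<le> real (card I) * (\<Sum>i\<in>I. (f i)^2)"
proof (cases "I = {}")
  case True thus ?thesis by simp
next
  case False
  define m where "m = real (card I)"
  have m0: "m > 0" using False fin by (simp add: m_def card_gt_0_iff)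
  define S where "S = (\<Sum>i\<in>I. f i)"
  define mu where "mu = S / m"
  have "0 \<le> (\<Sum>i\<in>I. (f i - mu)^2)" by (simp add: sum_nonneg)
  also have "\<dots> = (\<Sum>i\<in>I. (f i)^2) - 2 * mu * S + m * mu^2"
    by (simp add: power2_eq_square algebra_simps sum.distrib sum_subtractf sum_distrib_left S_def m_def sum_distrib_right)
  also have "\<dots> = (\<Sum>i\<in>I. (f i)^2) - S^2 / m"
    using m0 by (simp add: mu_def power2_eq_square field_simps)
  finally have "S^2 / m \<le> (\<Sum>i\<in>I. (f i)^2)" by simp
  hence "S^2 \<le> m * (\<Sum>i\<in>I. (f i)^2)" using m0 by (simp add: pos_divide_le_eq mult.commute)
  thus ?thesis by (simp add: S_def m_def)
qed

lemma eterm_sq: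
  assumes sg: "simple_graph V E" and e: "e \<in> E" and deg: "\<And>x. x \<in> V \<Longrightarrow> degree V E x \<ge> 1"
  shows "(eterm V E e)^2 = (\<Sum>x\<in>e. 1 / real (degree V E x)) - 2 / real (\<Prod>x\<in>e. degree V E x)"
proof -
  obtain x y where xy: "e = {x,y}" "x \<in> V" "y \<in> V" "x \<noteq> y" using sg_edge[OF sg e] by blast
  define a where "a = real (degree V E x)"
  define b where "b = real (degree V E y)"
  have a: "a \<ge> 1" "b \<ge> 1" using deg xy by (auto simp: a_def b_def)
  have "(eterm V E e)^2 = (a + b - 2) / (a * b)"
    using xy a by (simp add: eterm_def a_def b_def)
  also have "\<dots> = 1/a + 1/b - 2/(a*b)" using a by (simp add: field_simps)
  finally show ?thesis using xy by (simp add: a_def b_def)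
qed

lemma handshake_inv:
  assumes sg: "simple_graph V E" and deg: "\<And>x. x \<in> V \<Longrightarrow> degree V E x \<ge> 1"
  shows "(\<Sum>e\<in>E. \<Sum>x\<in>e. 1 / real (degree V E x)) = real (card V)"
proof -
  have finV: "finite V" using sg_finV[OF sg] .
  have finE: "finite E" using sg_finE[OF sg] .
  have "(\<Sum>e\<in>E. \<Sum>x\<in>e. 1 / real (degree V E x)) = (\<Sum>e\<in>E. \<Sum>x\<in>{x. x \<in> V \<and> x \<in> e}. 1 / real (degree V E x))"
  proof (rule sum.cong[OF refl])
    fix e assume "e \<in> E"
    hence "{x. x \<in> V \<and> x \<in> e} = e" using sg_edge_sub[OF sg] by blast
    thus "(\<Sum>x\<in>e. 1 / real (degree V E x)) = (\<Sum>x\<in>{x. x \<in> V \<and> x \<in> e}. 1 / real (degree V E x))" by simp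
  qed
  also have "\<dots> = (\<Sum>x\<in>V. \<Sum>e\<in>{e. e \<in> E \<and> x \<in> e}. 1 / real (degree V E x))"
    by (rule sum.swap_restrict[OF finE finV])
  also have "\<dots> = (\<Sum>x\<in>V. 1)"
  proof (rule sum.cong[OF refl])
    fix x assume x: "x \<in> V"
    have "card {e. e \<in> E \<and> x \<in> e} = degree V E x" using degree_edges[OF sg x] by simp
    thus "(\<Sum>e\<in>{e. e \<in> E \<and> x \<in> e}. 1 / real (degree V E x)) = 1" using deg[OF x] by simp
  qed
  finally show ?thesis by simp
qed

lemma cauchy_bound:
  assumes sg: "simple_graph V E" and n: "card V = n" "n \<ge> 2"
    and deg: "\<And>x. x \<in> V \<Longrightarrow> degree V E x \<ge> 1"
  shows "(ABC V E)^2 \<le> real (card E) * (real n - 2 * real (card E) / (real n - 1)^2)"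
proof -
  have finE: "finite E" using sg_finE[OF sg] .
  have n1: "real n - 1 > 0" using n by simp
  have prodle: "2 / (real n - 1)^2 \<le> 2 / real (\<Prod>x\<in>e. degree V E x)" if e: "e \<in> E" for e
  proof -
    obtain x y where xy: "e = {x,y}" "x \<in> V" "y \<in> V" "x \<noteq> y" using sg_edge[OF sg e] by blast
    have "real (degree V E x) \<le> real n - 1" "real (degree V E y) \<le> real n - 1"
      using degree_le[OF sg xy(2)] degree_le[OF sg xy(3)] n by linarith+
    moreover have "real (degree V E x) \<ge> 1" "real (degree V E y) \<ge> 1" using deg xy by auto
    ultimately have "real (degree V E x) * real (degree V E y) \<le> (real n - 1)^2"
      by (simp add: power2_eq_square mult_mono)
    moreover have "real (degree V E x) * real (degree V E y) > 0"
      using deg[OF xy(2)] deg[OF xy(3)] by (intro mult_pos_pos) auto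
    ultimately show ?thesis using xy by (simp add: frac_le)
  qed
  have "(\<Sum>e\<in>E. (eterm V E e)^2) = (\<Sum>e\<in>E. (\<Sum>x\<in>e. 1 / real (degree V E x)) - 2 / real (\<Prod>x\<in>e. degree V E x))"
    using eterm_sq[OF sg _ deg] by (intro sum.cong) auto
  also have "\<dots> = real n - (\<Sum>e\<in>E. 2 / real (\<Prod>x\<in>e. degree V E x))"
    using handshake_inv[OF sg deg] n by (simp add: sum_subtractf)
  also have "\<dots> \<le> real n - (\<Sum>e\<in>E. 2 / (real n - 1)^2)"
  proof -
    have "(\<Sum>e\<in>E. 2 / (real n - 1)^2) \<le> (\<Sum>e\<in>E. 2 / real (\<Prod>x\<in>e. degree V E x))"
      by (rule sum_mono) (rule prodle)
    thus ?thesis by linarith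
  qed
  finally have s2: "(\<Sum>e\<in>E. (eterm V E e)^2) \<le> real n - 2 * real (card E) / (real n - 1)^2" by (simp add: mult.commute)
  have "(ABC V E)^2 \<le> real (card E) * (\<Sum>e\<in>E. (eterm V E e)^2)"
    unfolding ABC_eterm by (rule cs_card[OF finE])
  also have "\<dots> \<le> real (card E) * (real n - 2 * real (card E) / (real n - 1)^2)"
    using s2 by (intro mult_left_mono) auto
  finally show ?thesis .
qed




lemma frac_cmp: fixes a b c d :: real
  assumes "b > 0" "d > 0" "a * d \<le> c * b" shows "a / b \<le> c / d"
  using assms by (simp add: divide_simps)

definition bnd :: "nat \<Rightarrow> nat \<Rightarrow> real" where
  "bnd n k = k * sqrt ((real n + k - 3) / (k * (real n - 1)))
            + (k * (real k - 1)) / (2 * (real n - 1)) * sqrt (2 * real n - 4)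
            + ((real n - k - 1) * (real n - k - 2)) / (2 * (real n - 2)) * sqrt (2 * real n - 6)
            + k * (real n - k - 1) * sqrt ((2 * real n - 5) / ((real n - 1) * (real n - 2)))"

lemma bnd_ge:
  fixes n k :: nat
  assumes k: "k \<ge> 2" "k + 2 \<le> n" and n: "n \<ge> 6"
  shows "((real n - 1) * (real n - 2) / 2 + k) * (sqrt (2 * real n - 4) / (real n - 1)) \<le> bnd n k"
proof -
  define N where "N = real n"
  define K where "K = real k"
  have N: "N \<ge> 6" using n by (simp add: N_def)
  have K: "K \<ge> 2" "K + 2 \<le> N" using k by (simp_all add: K_def N_def)
  define t where "t = sqrt (2 * N - 4) / (N - 1)"
  have t: "t = sqrt ((2 * N - 4) / (N - 1)^2)" using N
    by (simp add: t_def real_sqrt_divide)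
  have t0: "t \<ge> 0" using N by (simp add: t_def)
  have T1: "K * t \<le> K * sqrt ((N + K - 3) / (K * (N - 1)))"
  proof -
    have "(2 * N - 4) * (K * (N - 1)) \<le> (N + K - 3) * (N - 1)^2"
    proof -
      have "0 \<le> (N - 3) * (N - 1 - K) * (N - 1)" using N K by (intro mult_nonneg_nonneg) auto
      thus ?thesis by (simp add: power2_eq_square algebra_simps)
    qed
    hence "(2 * N - 4) / (N - 1)^2 \<le> (N + K - 3) / (K * (N - 1))"
      using N K by (intro frac_cmp) auto
    thus ?thesis unfolding t using K by (intro mult_left_mono) auto
  qed
  have T2: "(K * (K - 1)) / (2 * (N - 1)) * sqrt (2 * N - 4) = (K * (K - 1) / 2) * t"
    unfolding t_def using N by simp
  have T3: "((N - K - 1) * (N - K - 2) / 2) * t \<le> ((N - K - 1) * (N - K - 2)) / (2 * (N - 2)) * sqrt (2 * N - 6)"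
  proof -
    have "(2 * N - 4) * (N - 2)^2 \<le> (2 * N - 6) * (N - 1)^2"
    proof -
      have "0 \<le> (N - 5) * N" using N by (intro mult_nonneg_nonneg) auto
      hence "0 \<le> 2 * (N * N - 5 * N + 5)" by (simp add: algebra_simps)
      thus ?thesis by (simp add: power2_eq_square algebra_simps)
    qed
    hence "(2 * N - 4) / (N - 1)^2 \<le> (2 * N - 6) / (N - 2)^2"
      using N by (intro frac_cmp) auto
    hence "t \<le> sqrt ((2 * N - 6) / (N - 2)^2)" unfolding t by simp
    also have "\<dots> = sqrt (2 * N - 6) / (N - 2)" using N by (simp add: real_sqrt_divide)
    finally have "t \<le> sqrt (2 * N - 6) / (N - 2)" .
    moreover have "(N - K - 1) * (N - K - 2) / 2 \<ge> 0" using K by simp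
    ultimately have "((N - K - 1) * (N - K - 2) / 2) * t \<le> ((N - K - 1) * (N - K - 2) / 2) * (sqrt (2 * N - 6) / (N - 2))"
      by (rule mult_left_mono)
    thus ?thesis by simp
  qed
  have T4: "(K * (N - K - 1)) * t \<le> K * (N - K - 1) * sqrt ((2 * N - 5) / ((N - 1) * (N - 2)))"
  proof -
    have "(2 * N - 4) * ((N - 1) * (N - 2)) \<le> (2 * N - 5) * (N - 1)^2"
    proof -
      have "0 \<le> (N - 3) * (N - 1)" using N by simp
      thus ?thesis by (simp add: power2_eq_square algebra_simps)
    qed
    hence "(2 * N - 4) / (N - 1)^2 \<le> (2 * N - 5) / ((N - 1) * (N - 2))"
      using N by (intro frac_cmp) auto
    thus ?thesis unfolding t using K by (intro mult_left_mono) auto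
  qed
  have "((N - 1) * (N - 2) / 2 + K) * t = K * t + (K * (K - 1) / 2) * t + ((N - K - 1) * (N - K - 2) / 2) * t + (K * (N - K - 1)) * t"
    by (simp add: field_simps)
  also have "\<dots> \<le> bnd n k"
    unfolding bnd_def N_def[symmetric] K_def[symmetric] using T1 T2 T3 T4 by linarith
  finally show ?thesis by (simp add: N_def K_def t_def)
qed




lemma poly_id:
  fixes p q :: real
  shows "((p + 2*q + 8 - 1) * (p + 2*q + 8 - 2) / 2 + (q+2))^2 * (2 * (p + 2*q + 8) - 4)
       - ((p + 2*q + 8) * ((p + 2*q + 8) - 1) / 2 - ((q+2) + 2) * ((p + 2*q + 8) - (q+2) - 2) + (q+2))
         * ((p + 2*q + 8) * ((p + 2*q + 8) - 1)^2
            - 2 * ((p + 2*q + 8) * ((p + 2*q + 8) - 1) / 2 - ((q+2) + 2) * ((p + 2*q + 8) - (q+2) - 2) + (q+2)))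
     = 1252 + 2648 * q^1 + 2016 * q^2 + 718 * q^3 + 122 * q^4 + 8 * q^4 * q + 1216 * p^1 + 1901 * p^1 * q^1 + 1039 * p^1 * q^2 + 240 * p^1 * q^3 + 20 * p^1 * q^4 + 366 * p^2 + 429 * p^2 * q^1 + 156 * p^2 * q^2 + 18 * p^2 * q^3 + 44 * p^3 + 37 * p^3 * q^1 + 7 * p^3 * q^2 + 2 * p^4 + 1 * p^4 * q^1"
  by (simp add: field_simps power2_eq_square power3_eq_cube power4_eq_xxxx)

lemma caseB_real:
  fixes n k :: nat and m X :: real
  assumes k: "k \<ge> 2" and n: "2 * k + 4 \<le> n" and m0: "0 \<le> m"
    and mM: "m \<le> real n * (real n - 1) / 2 - (real k + 2) * (real n - real k - 2) + real k"
    and X0: "X \<ge> 0" and X: "X^2 \<le> m * (real n - 2 * m / (real n - 1)^2)"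
  shows "X < bnd n k"
proof -
  define N where "N = real n"
  define K where "K = real k"
  define M0 where "M0 = N * (N - 1) / 2 - (K + 2) * (N - K - 2) + K"
  define me where "me = (N - 1) * (N - 2) / 2 + K"
  define D where "D = (N - 1)^2"
  have N: "N \<ge> 2 * K + 4" "N \<ge> 8" using n k by (simp_all add: N_def K_def)
  have K: "K \<ge> 2" using k by (simp add: K_def)
  have D0: "D > 0" using N by (simp add: D_def)
  have mM0: "m \<le> M0" using mM by (simp add: M0_def N_def K_def)
  have M0le: "M0 \<le> N * (N - 1) / 2"
  proof -
    have "(K + 2) * 2 \<le> (K + 2) * (N - K - 2)" using N K by (intro mult_left_mono) auto
    moreover have "(K + 2) * 2 = 2 * K + 4" by simp
    ultimately have "(K + 2) * (N - K - 2) \<ge> K" using K by linarith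
    thus ?thesis unfolding M0_def by linarith
  qed
  have s1: "m * (N - 2 * m / D) \<le> M0 * (N - 2 * M0 / D)"
  proof -
    have "2 * (M0 + m) \<le> N * D"
    proof -
      have "N * (N - 1) * 2 \<le> N * (N - 1) * (N - 1)" using N by (intro mult_left_mono) auto
      thus ?thesis using M0le mM0 by (simp add: D_def power2_eq_square algebra_simps)
    qed
    hence "2 * (M0 + m) / D \<le> N" using D0 by (simp add: divide_le_eq)
    hence "0 \<le> (M0 - m) * (N - 2 * (M0 + m) / D)" using mM0 by (intro mult_nonneg_nonneg) auto
    thus ?thesis by (simp add: algebra_simps add_divide_distrib diff_divide_distrib)
  qed
  have s2: "M0 * (N - 2 * M0 / D) < me^2 * (2 * N - 4) / D"
  proof -
    define p where "p = n - 2 * k - 4"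
    define q where "q = k - 2"
    have pq: "N = real p + 2 * real q + 8" "K = real q + 2" using n k
      by (simp_all add: p_def q_def N_def K_def of_nat_diff)
    have "me^2 * (2 * N - 4) - M0 * (N * D - 2 * M0) = 1252 + 2648 * real q^1 + 2016 * real q^2 + 718 * real q^3 + 122 * real q^4 + 8 * real q^4 * real q + 1216 * real p^1 + 1901 * real p^1 * real q^1 + 1039 * real p^1 * real q^2 + 240 * real p^1 * real q^3 + 20 * real p^1 * real q^4 + 366 * real p^2 + 429 * real p^2 * real q^1 + 156 * real p^2 * real q^2 + 18 * real p^2 * real q^3 + 44 * real p^3 + 37 * real p^3 * real q^1 + 7 * real p^3 * real q^2 + 2 * real p^4 + 1 * real p^4 * real q^1"
      unfolding me_def M0_def D_def pq by (rule poly_id)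
    also have "\<dots> = real (1252 + 2648 * q^1 + 2016 * q^2 + 718 * q^3 + 122 * q^4 + 8 * q^4 * q + 1216 * p^1 + 1901 * p^1 * q^1 + 1039 * p^1 * q^2 + 240 * p^1 * q^3 + 20 * p^1 * q^4 + 366 * p^2 + 429 * p^2 * q^1 + 156 * p^2 * q^2 + 18 * p^2 * q^3 + 44 * p^3 + 37 * p^3 * q^1 + 7 * p^3 * q^2 + 2 * p^4 + 1 * p^4 * q^1)" by simp
    finally have "me^2 * (2 * N - 4) - M0 * (N * D - 2 * M0) = real (1252 + 2648 * q^1 + 2016 * q^2 + 718 * q^3 + 122 * q^4 + 8 * q^4 * q + 1216 * p^1 + 1901 * p^1 * q^1 + 1039 * p^1 * q^2 + 240 * p^1 * q^3 + 20 * p^1 * q^4 + 366 * p^2 + 429 * p^2 * q^1 + 156 * p^2 * q^2 + 18 * p^2 * q^3 + 44 * p^3 + 37 * p^3 * q^1 + 7 * p^3 * q^2 + 2 * p^4 + 1 * p^4 * q^1)" .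
    hence "me^2 * (2 * N - 4) - M0 * (N * D - 2 * M0) > 0" by linarith
    hence "M0 * (N * D - 2 * M0) < me^2 * (2 * N - 4)" by simp
    moreover have "M0 * (N - 2 * M0 / D) = M0 * (N * D - 2 * M0) / D" using D0 by (simp add: field_simps)
    ultimately show ?thesis using D0 by (simp add: divide_strict_right_mono)
  qed
  define t where "t = sqrt (2 * N - 4) / (N - 1)"
  have t2: "t^2 = (2 * N - 4) / D" using N by (simp add: t_def D_def power_divide)
  have met: "me * t \<ge> 0" using N K by (simp add: me_def t_def)
  have "X^2 < (me * t)^2"
    using X s1 s2 t2 by (simp add: power_mult_distrib N_def D_def) 
  hence "X < me * t" using met by (rule power_less_imp_less_base)
  also have "me * t \<le> bnd n k" using bnd_ge[of k n] k n
    by (simp add: me_def t_def N_def K_def)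
  finally show ?thesis .
qed




lemma ABC_iso:
  assumes sg: "simple_graph V E" and sgW: "simple_graph W F" and iso: "graph_iso V E W F"
  shows "ABC V E = ABC W F"
proof -
  obtain f where bij: "bij_betw f V W" and c: "\<And>u v. u \<in> V \<Longrightarrow> v \<in> V \<Longrightarrow> {u, v} \<in> E \<longleftrightarrow> {f u, f v} \<in> F"
    using iso unfolding graph_iso_def by blast
  have inj: "inj_on f V" and img: "f ` V = W" using bij by (auto simp: bij_betw_def)
  have Fimg: "F = (image f) ` E"
  proof
    show "(image f) ` E \<subseteq> F"
    proof
      fix e' assume "e' \<in> (image f) ` E"
      then obtain e where e: "e \<in> E" "e' = f ` e" by blast
      then obtain x y where xy: "e = {x,y}" "x \<in> V" "y \<in> V" "x \<noteq> y" using sg_edge[OF sg] by blast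
      show "e' \<in> F" using c[OF xy(2,3)] e xy by simp
    qed
    show "F \<subseteq> (image f) ` E"
    proof
      fix e' assume e': "e' \<in> F"
      then obtain a b where ab: "e' = {a,b}" "a \<in> W" "b \<in> W" using sg_edge[OF sgW] by blast
      then obtain x y where xy: "x \<in> V" "y \<in> V" "a = f x" "b = f y" using img by blast
      have "{x,y} \<in> E" using c[OF xy(1,2)] e' ab xy by simp
      thus "e' \<in> (image f) ` E" using ab xy by (intro image_eqI[of _ _ "{x,y}"]) auto
    qed
  qed
  have injE: "inj_on (image f) E"
    by (rule inj_onI) (use inj sg_edge_sub[OF sg] in \<open>meson inj_on_image_eq_iff\<close>)
  have degeq: "degree W F (f x) = degree V E x" if x: "x \<in> V" for x
  proof -
    have "{w\<in>W. {f x, w} \<in> F} = f ` {y\<in>V. {x,y}\<in>E}"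
    proof
      show "{w \<in> W. {f x, w} \<in> F} \<subseteq> f ` {y \<in> V. {x, y} \<in> E}"
      proof
        fix w assume w: "w \<in> {w \<in> W. {f x, w} \<in> F}"
        then obtain y where y: "y \<in> V" "w = f y" using img by blast
        thus "w \<in> f ` {y \<in> V. {x, y} \<in> E}" using c[OF x y(1)] w by auto
      qed
      show "f ` {y \<in> V. {x, y} \<in> E} \<subseteq> {w \<in> W. {f x, w} \<in> F}"
        using c[OF x] img by auto
    qed
    moreover have "inj_on f {y\<in>V. {x,y}\<in>E}" using inj by (rule inj_on_subset) auto
    ultimately show ?thesis unfolding degree_def by (simp add: card_image)
  qed
  have et: "eterm W F (f ` e) = eterm V E e" if e: "e \<in> E" for e
  proof -
    obtain x y where xy: "e = {x,y}" "x \<in> V" "y \<in> V" "x \<noteq> y" using sg_edge[OF sg e] by blast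
    have "f x \<noteq> f y" using inj xy by (meson inj_on_contraD)
    thus ?thesis using xy by (simp add: eterm_pair degeq)
  qed
  have "ABC W F = (\<Sum>e'\<in>(image f) ` E. eterm W F e')" by (simp add: ABC_eterm Fimg)
  also have "\<dots> = (\<Sum>e\<in>E. eterm W F (f ` e))" by (rule sum.reindex[OF injE, unfolded comp_def])
  also have "\<dots> = (\<Sum>e\<in>E. eterm V E e)" by (rule sum.cong) (auto simp: et)
  finally show ?thesis by (simp add: ABC_eterm)
qed




lemma join_mem:
  "{a,b} \<in> join_graph_edges n k \<longleftrightarrow> a < n \<and> b < n \<and> a \<noteq> b \<and> \<not> (a = k \<and> k < b) \<and> \<not> (b = k \<and> k < a)"
  unfolding join_graph_edges_def by (auto simp: doubleton_eq_iff)

lemma join_sg: "simple_graph {0..<n} (join_graph_edges n k)"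
  unfolding simple_graph_def join_graph_edges_def by auto

lemma join_deg:
  assumes kn: "k < n" and i: "i < n"
  shows "degree {0..<n} (join_graph_edges n k) i = (if i < k then n - 1 else if i = k then k else n - 2)"
proof -
  let ?S = "{j \<in> {0..<n}. {i, j} \<in> join_graph_edges n k}"
  show ?thesis
  proof (cases "i < k")
    case True
    have "?S = {0..<n} - {i}" using True kn i by (auto simp: join_mem)
    thus ?thesis unfolding degree_def using True i by simp
  next
    case F: False
    show ?thesis
    proof (cases "i = k")
      case True
      have "?S = {0..<k}" using True kn i by (auto simp: join_mem)
      thus ?thesis unfolding degree_def using True by simp
    next
      case False
      have "?S = {0..<n} - {i, k}" using F False kn i by (auto simp: join_mem)
      thus ?thesis unfolding degree_def using F False i kn by (simp add: card_Diff_subset)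
    qed
  qed
qed

lemma join_as_image:
  "join_graph_edges n k = (\<lambda>(j,i). {i,j}) ` (SIGMA j:{..<n}. {i. i < j \<and> i \<noteq> k})"
proof
  show "join_graph_edges n k \<subseteq> (\<lambda>(j,i). {i,j}) ` (SIGMA j:{..<n}. {i. i < j \<and> i \<noteq> k})"
  proof
    fix e assume "e \<in> join_graph_edges n k"
    then obtain i j where e: "e = {i,j}" "i < n" "j < n" "i \<noteq> j" "\<not> (i = k \<and> k < j)" "\<not> (j = k \<and> k < i)"
      unfolding join_graph_edges_def by blast
    show "e \<in> (\<lambda>(j,i). {i,j}) ` (SIGMA j:{..<n}. {i. i < j \<and> i \<noteq> k})"
    proof (cases "i < j")
      case True thus ?thesis using e by (intro image_eqI[of _ _ "(j,i)"]) auto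
    next
      case False thus ?thesis using e by (intro image_eqI[of _ _ "(i,j)"]) (auto simp: insert_commute)
    qed
  qed
  show "(\<lambda>(j,i). {i,j}) ` (SIGMA j:{..<n}. {i. i < j \<and> i \<noteq> k}) \<subseteq> join_graph_edges n k"
  proof
    fix e assume "e \<in> (\<lambda>(j,i). {i,j}) ` (SIGMA j:{..<n}. {i. i < j \<and> i \<noteq> k})"
    then obtain i j where "e = {i,j}" "j < n" "i < j" "i \<noteq> k" by auto
    thus "e \<in> join_graph_edges n k" by (simp add: join_mem)
  qed
qed

lemma join_inj: "inj_on (\<lambda>(j,i). {i,j}) (SIGMA j:{..<n}. {i. i < (j::nat) \<and> i \<noteq> k})"
  by (auto simp: inj_on_def doubleton_eq_iff)

lemma sum_lt_real: "(\<Sum>j<k. real j) = real k * (real k - 1) / 2"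
  by (induction k) (simp_all add: field_simps)

lemma piece_sum:
  fixes c1 c2 c3 c4 :: real
  assumes "N \<ge> k + 1"
  shows "(\<Sum>j<N. (if j < k then real j * c1 else if j = k then real k * c2 else real k * c3 + (real j - k - 1) * c4))
      = real k * (real k - 1) / 2 * c1 + real k * c2 + (real N - k - 1) * real k * c3 + (real N - k - 1) * (real N - k - 2) / 2 * c4"
  using assms
proof (induction N rule: dec_induct)
  case base
  have "(\<Sum>j<k. (if j < k then real j * c1 else if j = k then real k * c2 else real k * c3 + (real j - k - 1) * c4))
      = (\<Sum>j<k. real j * c1)" by simp
  also have "\<dots> = real k * (real k - 1) / 2 * c1" by (simp add: sum_distrib_right[symmetric] sum_lt_real)
  finally show ?case by simp
next
  case (step N)
  thus ?case by (simp add: field_simps)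
qed

lemma ABC_join:
  assumes k: "k \<ge> 2" "k < n" and n: "n \<ge> 6"
  shows "ABC {0..<n} (join_graph_edges n k) = bnd n k"
proof -
  let ?J = "join_graph_edges n k"
  let ?d = "\<lambda>i. real (degree {0..<n} ?J i)"
  define c1 where "c1 = fab (real n - 1) (real n - 1)"
  define c2 where "c2 = fab (real n - 1) (real k)"
  define c3 where "c3 = fab (real n - 1) (real n - 2)"
  define c4 where "c4 = fab (real n - 2) (real n - 2)"
  have dd: "?d i = (if i < k then real n - 1 else if i = k then real k else real n - 2)" if "i < n" for i
    using join_deg[OF k(2) that] n by (auto simp: of_nat_diff)
  have inner: "(\<Sum>i\<in>{i. i < j \<and> i \<noteq> k}. eterm {0..<n} ?J {i,j})
     = (if j < k then real j * c1 else if j = k then real k * c2 else real k * c3 + (real j - k - 1) * c4)"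
    if j: "j < n" for j
  proof -
    have e: "eterm {0..<n} ?J {i,j} = fab (?d i) (?d j)" if "i < j" for i
      using that by (simp add: eterm_pair)
    show ?thesis
    proof (cases "j \<le> k")
      case True
      have s: "{i. i < j \<and> i \<noteq> k} = {..<j}" using True by auto
      have "(\<Sum>i\<in>{..<j}. eterm {0..<n} ?J {i,j}) = (\<Sum>i\<in>{..<j}. (if j < k then c1 else c2))"
        by (rule sum.cong[OF refl]) (use True j in \<open>auto simp: e dd c1_def c2_def\<close>)
      thus ?thesis using True s by auto
    next
      case False
      have s: "{i. i < j \<and> i \<noteq> k} = {..<k} \<union> {k<..<j}" using False by auto
      have "(\<Sum>i\<in>{..<k} \<union> {k<..<j}. eterm {0..<n} ?J {i,j}) = (\<Sum>i\<in>{..<k}. eterm {0..<n} ?J {i,j}) + (\<Sum>i\<in>{k<..<j}. eterm {0..<n} ?J {i,j})"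
        by (rule sum.union_disjoint) auto
      also have "(\<Sum>i\<in>{..<k}. eterm {0..<n} ?J {i,j}) = (\<Sum>i\<in>{..<k}. c3)"
        by (rule sum.cong[OF refl]) (use False j in \<open>auto simp: e dd c3_def\<close>)
      also have "(\<Sum>i\<in>{k<..<j}. eterm {0..<n} ?J {i,j}) = (\<Sum>i\<in>{k<..<j}. c4)"
        by (rule sum.cong[OF refl]) (use False j in \<open>auto simp: e dd c4_def\<close>)
      finally show ?thesis using False s by (simp add: of_nat_diff)
    qed
  qed
  have "ABC {0..<n} ?J = (\<Sum>e\<in>(\<lambda>(j,i). {i,j}) ` (SIGMA j:{..<n}. {i. i < j \<and> i \<noteq> k}). eterm {0..<n} ?J e)"
    by (simp add: ABC_eterm join_as_image[symmetric])
  also have "\<dots> = (\<Sum>(j,i)\<in>(SIGMA j:{..<n}. {i. i < j \<and> i \<noteq> k}). eterm {0..<n} ?J {i,j})"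
    by (subst sum.reindex[OF join_inj]) (simp add: case_prod_unfold)
  also have "\<dots> = (\<Sum>j<n. \<Sum>i\<in>{i. i < j \<and> i \<noteq> k}. eterm {0..<n} ?J {i,j})"
    by (subst sum.Sigma[symmetric]) auto
  also have "\<dots> = (\<Sum>j<n. (if j < k then real j * c1 else if j = k then real k * c2 else real k * c3 + (real j - k - 1) * c4))"
    by (rule sum.cong[OF refl]) (simp add: inner)
  also have "\<dots> = real k * (real k - 1) / 2 * c1 + real k * c2 + (real n - k - 1) * real k * c3 + (real n - k - 1) * (real n - k - 2) / 2 * c4"
    using k by (intro piece_sum) auto
  also have "\<dots> = bnd n k"
  proof -
    have n1: "real n - 1 > 0" "real n - 2 > 0" using n by auto
    have C1: "c1 = sqrt (2 * real n - 4) / (real n - 1)"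
      unfolding c1_def fab_def using n1 by (simp add: real_sqrt_divide power2_eq_square[symmetric])
    have C2: "c2 = sqrt ((real n + k - 3) / (k * (real n - 1)))"
      unfolding c2_def fab_def by (simp add: algebra_simps)
    have C3: "c3 = sqrt ((2 * real n - 5) / ((real n - 1) * (real n - 2)))"
      unfolding c3_def fab_def by (simp add: algebra_simps)
    have C4: "c4 = sqrt (2 * real n - 6) / (real n - 2)"
      unfolding c4_def fab_def using n1 by (simp add: real_sqrt_divide power2_eq_square[symmetric])
    show ?thesis unfolding bnd_def C1 C2 C3 C4 by (simp add: field_simps)
  qed
  finally show ?thesis .
qed




lemma choose2_real: "real (a choose 2) = real a * (real a - 1) / 2"
proof -
  have "even (a * (a - 1))" by auto
  hence "real (a * (a - 1) div 2) = real (a * (a - 1)) / 2" by (simp add: real_of_nat_div)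
  thus ?thesis by (cases a) (simp_all add: choose_two algebra_simps)
qed

lemma Hv_iso:
  assumes sg: "simple_graph V E" and n: "card V = n" and v: "v \<in> V"
    and Ndef: "N = {w\<in>V. {v,w}\<in>E}" and cN: "card N = k" and kn: "k < n"
    and Hdef: "H = {{x,y} | x y. x \<in> V \<and> y \<in> V \<and> x \<noteq> y \<and> (x = v \<longrightarrow> y \<in> N) \<and> (y = v \<longrightarrow> x \<in> N)}"
  shows "simple_graph V H" "E \<subseteq> H" "graph_iso V H {0..<n} (join_graph_edges n k)"
proof -
  have finV: "finite V" using sg_finV[OF sg] .
  have Hmem: "{a,b} \<in> H \<longleftrightarrow> a \<in> V \<and> b \<in> V \<and> a \<noteq> b \<and> (a = v \<longrightarrow> b \<in> N) \<and> (b = v \<longrightarrow> a \<in> N)" for a b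
    unfolding Hdef by (auto simp: doubleton_eq_iff)
  show "simple_graph V H" using finV unfolding simple_graph_def Hdef by blast
  show "E \<subseteq> H"
  proof
    fix e assume e: "e \<in> E"
    then obtain x y where xy: "e = {x,y}" "x \<in> V" "y \<in> V" "x \<noteq> y" using sg_edge[OF sg] by blast
    thus "e \<in> H" using e unfolding Hmem[of x y, folded xy(1)] by (auto simp: Ndef insert_commute)
  qed
  have vN: "v \<notin> N" using sg_loop[OF sg, of v] Ndef by auto
  have NV: "N \<subseteq> V" using Ndef by auto
  define R where "R = V - N - {v}"
  have finN: "finite N" using finV NV finite_subset by blast
  have cR: "card R = n - k - 1" unfolding R_def using finV finN NV v vN n cN
    by (simp add: card_Diff_subset card_Diff_singleton_if)
  obtain g1 where g1: "bij_betw g1 N {0..<k}" using ex_bij_betw_finite_nat[OF finN] cN by blast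
  obtain g2 where g2: "bij_betw g2 R {0..<n-k-1}" using ex_bij_betw_finite_nat[of R] finV cR
    unfolding R_def by auto
  define phi where "phi x = (if x = v then k else if x \<in> N then g1 x else k + 1 + g2 x)" for x
  have b1: "bij_betw phi {v} {k}" by (simp add: phi_def bij_betw_def)
  have "bij_betw phi N {0..<k} = bij_betw g1 N {0..<k}"
    by (rule bij_betw_cong) (use vN in \<open>auto simp: phi_def\<close>)
  hence b2: "bij_betw phi N {0..<k}" using g1 by simp
  have b3: "bij_betw phi R {k+1..<n}"
  proof -
    have inj: "inj_on phi R"
    proof (rule inj_onI)
      fix x y assume "x \<in> R" "y \<in> R" "phi x = phi y"
      thus "x = y" using g2 unfolding phi_def R_def bij_betw_def by (auto dest: inj_onD)
    qed
    have "phi ` R = {k+1..<n}"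
    proof
      show "phi ` R \<subseteq> {k+1..<n}"
      proof
        fix i assume "i \<in> phi ` R"
        then obtain x where x: "x \<in> R" "i = phi x" by blast
        have "g2 x \<in> {0..<n-k-1}" using bij_betwE[OF g2] x(1) by blast
        moreover have "phi x = k + 1 + g2 x" using x(1) unfolding phi_def R_def by auto
        ultimately show "i \<in> {k+1..<n}" using x(2) by auto
      qed
      show "{k+1..<n} \<subseteq> phi ` R"
      proof
        fix i assume i: "i \<in> {k+1..<n}"
        hence "i - k - 1 \<in> g2 ` R" using g2 unfolding bij_betw_def by auto
        then obtain x where x: "x \<in> R" "g2 x = i - k - 1" by (metis imageE)
        hence "phi x = i" using i unfolding phi_def R_def by auto
        thus "i \<in> phi ` R" using x by blast
      qed
    qed
    thus ?thesis using inj by (simp add: bij_betw_def)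
  qed
  have b12: "bij_betw phi ({v} \<union> N) ({k} \<union> {0..<k})" by (rule bij_betw_combine[OF b1 b2]) auto
  have b123: "bij_betw phi (({v} \<union> N) \<union> R) (({k} \<union> {0..<k}) \<union> {k+1..<n})"
    by (rule bij_betw_combine[OF b12 b3]) auto
  have VV: "({v} \<union> N) \<union> R = V" using v NV unfolding R_def by auto
  have WW: "({k} \<union> {0..<k}) \<union> {k+1..<n} = {0..<n}" using kn by auto
  have bij: "bij_betw phi V {0..<n}" using b123 unfolding VV WW .
  have g1lt: "g1 x < k" if "x \<in> N" for x using bij_betwE[OF g1] that by auto
  have p1: "phi x = k \<longleftrightarrow> x = v" if "x \<in> V" for x
    using that unfolding phi_def by (auto dest: g1lt)
  have p2: "phi x > k \<longleftrightarrow> x \<noteq> v \<and> x \<notin> N" if "x \<in> V" for x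
    using that unfolding phi_def by (auto dest: g1lt)
  have p3: "phi x < n" if "x \<in> V" for x using bij that unfolding bij_betw_def by auto
  have p4: "phi x = phi y \<longleftrightarrow> x = y" if "x \<in> V" "y \<in> V" for x y
    using bij that unfolding bij_betw_def by (auto dest: inj_onD)
  show "graph_iso V H {0..<n} (join_graph_edges n k)"
    unfolding graph_iso_def
  proof (intro exI conjI ballI)
    show "bij_betw phi V {0..<n}" by (rule bij)
    fix x y assume x: "x \<in> V" and y: "y \<in> V"
    show "({x, y} \<in> H) = ({phi x, phi y} \<in> join_graph_edges n k)"
      unfolding Hmem join_mem using p1[OF x] p1[OF y] p2[OF x] p2[OF y] p3[OF x] p3[OF y] p4[OF x y] x y vN
      by auto
  qed
qed




theorem main_bnd:
  fixes V :: "'a set" and E :: "'a set set" and n k :: nat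
  assumes sg: "simple_graph V E"
    and conn: "connected_graph V E"
    and nV: "card V = n" and n6: "n \<ge> 6"
    and ec: "edge_connectivity V E = k" and k2: "k \<ge> 2"
  shows "ABC V E \<le> bnd n k \<and> (ABC V E = bnd n k \<longleftrightarrow> graph_iso V E {0..<n} (join_graph_edges n k))"
proof -
  have finV: "finite V" using sg_finV[OF sg] .
  have c2: "card V \<ge> 2" using nV n6 by simp
  have degk: "degree V E x \<ge> k" if "x \<in> V" for x using ec_le_degree[OF sg c2 that] ec by simp
  have V0: "V \<noteq> {}" using c2 by auto
  then obtain x0 where x0: "x0 \<in> V" by blast
  have kn: "k < n" using degk[OF x0] degree_le[OF sg x0] nV n6 by simp
  have isoD: "ABC V E = bnd n k" if "graph_iso V E {0..<n} (join_graph_edges n k)"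
    using ABC_iso[OF sg join_sg that] ABC_join[OF k2 kn n6] by simp
  show ?thesis
  proof (cases "\<exists>v\<in>V. degree V E v = k")
    case True
    then obtain v where v: "v \<in> V" "degree V E v = k" by blast
    define N where "N = {w\<in>V. {v,w}\<in>E}"
    define H where "H = {{x,y} | x y. x \<in> V \<and> y \<in> V \<and> x \<noteq> y \<and> (x = v \<longrightarrow> y \<in> N) \<and> (y = v \<longrightarrow> x \<in> N)}"
    have cN: "card N = k" using v by (simp add: N_def degree_def)
    note HH = Hv_iso[OF sg nV v(1) N_def cN kn H_def]
    have mono: "ABC V E \<le> ABC V H \<and> (E \<noteq> H \<longrightarrow> ABC V E < ABC V H)"
      by (rule ABC_mono[OF sg HH(1) HH(2)]) (use degk k2 in force)
    have AH: "ABC V H = bnd n k" using ABC_iso[OF HH(1) join_sg HH(3)] ABC_join[OF k2 kn n6] by simp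
    show ?thesis
    proof (intro conjI iffI)
      show "ABC V E \<le> bnd n k" using mono AH by simp
      assume "ABC V E = bnd n k"
      hence "E = H" using mono AH by force
      thus "graph_iso V E {0..<n} (join_graph_edges n k)" using HH(3) by simp
    next
      assume "graph_iso V E {0..<n} (join_graph_edges n k)"
      thus "ABC V E = bnd n k" by (rule isoD)
    qed
  next
    case False
    hence degk1: "degree V E x \<ge> k + 1" if "x \<in> V" for x using degk[OF that] that by force
    obtain F where F: "F \<subseteq> E" "card F = k" "\<not> connected_graph V (E - F)"
      using ec_witness[OF sg c2] ec by auto
    let ?R = "(\<lambda>a b. {a, b} \<in> E - F)\<^sup>*\<^sup>*"
    obtain x y where xy: "x \<in> V" "y \<in> V" "\<not> ?R x y" using F(3) V0 unfolding connected_graph_def by blast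
    define A where "A = {z\<in>V. ?R x z}"
    have AV: "A \<subseteq> V" unfolding A_def by auto
    have xA: "x \<in> A" using xy unfolding A_def by auto
    have yA: "y \<in> V - A" using xy unfolding A_def by auto
    have finF: "finite F" using F(1) sg_finE[OF sg] finite_subset by blast
    have cross: "{z,w} \<in> F" if "z \<in> A" "w \<in> V" "w \<notin> A" "{z,w} \<in> E" for z w
    proof (rule ccontr)
      assume "{z,w} \<notin> F"
      hence "?R x w" using that unfolding A_def by (auto intro: rtranclp.rtrancl_into_rtrancl)
      thus False using that unfolding A_def by auto
    qed
    have cross2: "{z,w} \<in> F" if "z \<in> V - A" "w \<in> V" "w \<notin> V - A" "{z,w} \<in> E" for z w
      using cross[of w z] that AV by (auto simp: insert_commute)
    have a: "card A \<ge> k + 2"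
      by (rule side_big[OF sg AV _ cross finF]) (use xA F(2) degk1 in auto)
    have b: "card (V - A) \<ge> k + 2"
      by (rule side_big[OF sg _ _ cross2 finF]) (use yA F(2) degk1 in auto)
    have ab: "card A + card (V - A) = n" using AV finV nV
      by (metis card_Diff_subset finite_subset le_add_diff_inverse card_mono)
    have ecnt: "card E \<le> (card A choose 2) + (card (V - A) choose 2) + card F"
      by (rule edge_count[OF sg AV cross finF])
    define a' where "a' = real (card A)"
    define b' where "b' = real (card (V - A))"
    have ab': "a' + b' = real n" using ab by (simp add: a'_def b'_def flip: of_nat_add)
    have a'k: "a' \<ge> real k + 2" "b' \<ge> real k + 2" using a b by (simp_all add: a'_def b'_def)
    have mle: "real (card E) \<le> a' * (a' - 1) / 2 + b' * (b' - 1) / 2 + real k"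
    proof -
      have "real (card E) \<le> real ((card A choose 2) + (card (V - A) choose 2) + k)"
        using ecnt F(2) by (simp only: of_nat_le_iff)
      thus ?thesis unfolding a'_def b'_def of_nat_add choose2_real .
    qed
    have prod: "a' * b' \<ge> (real k + 2) * (real n - real k - 2)"
    proof -
      have "0 \<le> (a' - (real k + 2)) * (b' - (real k + 2))" using a'k by simp
      thus ?thesis unfolding ab'[symmetric] by (simp add: algebra_simps)
    qed
    have mM: "real (card E) \<le> real n * (real n - 1) / 2 - (real k + 2) * (real n - real k - 2) + real k"
    proof -
      have "a' * (a' - 1) / 2 + b' * (b' - 1) / 2 = real n * (real n - 1) / 2 - a' * b'"
        using ab'[symmetric] by (simp add: field_simps)
      thus ?thesis using mle prod by linarith
    qed
    have n2k: "2 * k + 4 \<le> n" using a b ab by simp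
    have X0: "ABC V E \<ge> 0" unfolding ABC_eterm
    proof (rule sum_nonneg)
      fix e assume e: "e \<in> E"
      then obtain x y where xy: "e = {x,y}" "x \<in> V" "y \<in> V" "x \<noteq> y" using sg_edge[OF sg] by blast
      have "real (degree V E x) \<ge> 1" "real (degree V E y) \<ge> 1" using degk1[OF xy(2)] degk1[OF xy(3)] by auto
      hence "(real (degree V E x) + real (degree V E y) - 2) / (real (degree V E x) * real (degree V E y)) \<ge> 0"
        by (intro divide_nonneg_pos) auto
      thus "eterm V E e \<ge> 0" using xy by (simp add: eterm_pair fab_def)
    qed
    have XC: "(ABC V E)^2 \<le> real (card E) * (real n - 2 * real (card E) / (real n - 1)^2)"
      by (rule cauchy_bound[OF sg nV]) (use n6 degk1 in force)+
    have lt: "ABC V E < bnd n k"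
      by (rule caseB_real[OF k2 n2k _ mM X0 XC]) simp
    show ?thesis using lt isoD by auto
  qed
qed


theorem theorem3p1:
  fixes V :: "'a set" and E :: "'a set set" and n k :: nat
  assumes "simple_graph V E"
    and "connected_graph V E"
    and "card V = n" and "n \<ge> 6"
    and "edge_connectivity V E = k" and "k \<ge> 2"
  shows "ABC V E \<le> k * sqrt ((real n + k - 3) / (k * (real n - 1)))
            + (k * (real k - 1)) / (2 * (real n - 1)) * sqrt (2 * real n - 4)
            + ((real n - k - 1) * (real n - k - 2)) / (2 * (real n - 2)) * sqrt (2 * real n - 6)
            + k * (real n - k - 1) * sqrt ((2 * real n - 5) / ((real n - 1) * (real n - 2)))
         \<and> (ABC V E = k * sqrt ((real n + k - 3) / (k * (real n - 1)))
            + (k * (real k - 1)) / (2 * (real n - 1)) * sqrt (2 * real n - 4)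
            + ((real n - k - 1) * (real n - k - 2)) / (2 * (real n - 2)) * sqrt (2 * real n - 6)
            + k * (real n - k - 1) * sqrt ((2 * real n - 5) / ((real n - 1) * (real n - 2)))
         \<longleftrightarrow> graph_iso V E {0..<n} (join_graph_edges n k))"
  using main_bnd[OF assms] unfolding bnd_def .

end
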